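(* Let $\Gamma$ be a finitely generated group which has a sequence of finite normal subgroups $A_i$ with $|A_i|\to\infty$. Then $\mathrm{RG}(\Gamma,(\Gamma_j))=0$ for any chain $(\Gamma_j)$ in $\Gamma$ with $\bigcap_j\Gamma_j=\{1\}$.
   Context: A chain in $\Gamma$ is a decreasing infinite sequence $\Gamma=\Gamma_0>\Gamma_1>\cdots$ of finite index subgroups (not necessarily normal). With $d(H)$ the minimal number of generators of $H$, $r(\Gamma,H)=(d(H)-1)/|\Gamma:H|$ and $\mathrm{RG}(\Gamma,(\Gamma_j))=\lim_j r(\Gamma,\Gamma_j)$. *)

theory Defs
  imports Complex_Main "HOL-Algebra.Algebra"
begin

definition min_gens :: "('a, 'b) monoid_scheme \<Rightarrow> 'a set \<Rightarrow> nat" where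
  "min_gens G H = (LEAST n. \<exists>S. S \<subseteq> H \<and> finite S \<and> card S = n \<and> generate G S = H)"

definition grp_index :: "('a, 'b) monoid_scheme \<Rightarrow> 'a set \<Rightarrow> nat" where
  "grp_index G H = card (rcosets\<^bsub>G\<^esub> H)"

definition rg_ratio :: "('a, 'b) monoid_scheme \<Rightarrow> 'a set \<Rightarrow> real" where
  "rg_ratio G H = (real (min_gens G H) - 1) / real (grp_index G H)"

definition finitely_generated_group :: "('a, 'b) monoid_scheme \<Rightarrow> bool" where
  "finitely_generated_group G \<longleftrightarrow> (\<exists>S. S \<subseteq> carrier G \<and> finite S \<and> generate G S = carrier G)"

definition is_chain :: "('a, 'b) monoid_scheme \<Rightarrow> (nat \<Rightarrow> 'a set) \<Rightarrow> bool" where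
  "is_chain G C \<longleftrightarrow> C 0 = carrier G \<and>
     (\<forall>j. subgroup (C j) G \<and> finite (rcosets\<^bsub>G\<^esub> (C j)) \<and> C (Suc j) \<subset> C j)"

end

theory Submission
  imports Defs "HOL-Algebra.SndIsomorphismGrp"
begin

context group begin

definition crep :: "'a set \<Rightarrow> 'a set \<Rightarrow> 'a" where
  "crep K D = (if D = K then \<one> else (SOME x. x \<in> D))"

lemma crep_props:
  assumes K: "subgroup K G" and D: "D \<in> rcosets K"
  shows "crep K D \<in> D" "crep K D \<in> carrier G" "K #> crep K D = D"
proof -
  obtain g where g: "g \<in> carrier G" "D = K #> g" using D unfolding RCOSETS_def by blast
  have gD: "g \<in> D" using g rcos_self K by blast
  show c: "crep K D \<in> D"
  proof (cases "D = K")
    case True thus ?thesis using K by (simp add: crep_def subgroup.one_closed)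
  next
    case False thus ?thesis using gD unfolding crep_def by (metis someI)
  qed
  show cc: "crep K D \<in> carrier G" using c g K r_coset_subset_G subgroup.subset by blast
  show "K #> crep K D = D" using repr_independence[OF _ g(1) K] c g by simp
qed

lemma crep_K: "crep K K = \<one>" by (simp add: crep_def)

lemma K_rcosets: "subgroup K G \<Longrightarrow> K \<in> rcosets K"
  using rcosetsI[of K \<one>] coset_mult_one subgroup.subset by fastforce

lemma schreier:
  assumes S: "S \<subseteq> carrier G" "finite S" "generate G S = carrier G"
    and K: "subgroup K G" "finite (rcosets K)"
  shows "\<exists>T. T \<subseteq> K \<and> finite T \<and> card T \<le> card (rcosets K) * (2 * card S) \<and> generate G T = K"
proof -
  define R where "R x = crep K (K #> x)" for x
  define S2 where "S2 = S \<union> (\<lambda>x. inv x) ` S"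
  define T where "T = (\<lambda>(D,s). crep K D \<otimes> s \<otimes> inv (R (crep K D \<otimes> s))) ` ((rcosets K) \<times> S2)"
  have Kc: "K \<subseteq> carrier G" using K subgroup.subset by blast
  have S2c: "S2 \<subseteq> carrier G" using S unfolding S2_def by auto
  have Rc: "R x \<in> carrier G" "R x \<in> K #> x" if "x \<in> carrier G" for x
    using crep_props[OF K(1) rcosetsI[OF Kc that]] unfolding R_def by auto
  have RK: "x \<otimes> inv (R x) \<in> K" if x: "x \<in> carrier G" for x
  proof -
    obtain k where k: "k \<in> K" "R x = k \<otimes> x" using Rc(2)[OF x] unfolding r_coset_def by blast
    have kc: "k \<in> carrier G" using k Kc by blast
    have "x \<otimes> inv (R x) = inv k" using k kc x
      by (simp add: inv_mult_group m_assoc[symmetric])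
    thus ?thesis using k K subgroup.m_inv_closed by metis
  qed
  have TK: "T \<subseteq> K"
    unfolding T_def using crep_props[OF K(1)] S2c RK by auto
  have finT: "finite T" unfolding T_def S2_def using S K by auto
  have cardT: "card T \<le> card (rcosets K) * (2 * card S)"
  proof -
    have "card T \<le> card ((rcosets K) \<times> S2)" unfolding T_def by (rule card_image_le) (use S K in \<open>auto simp: S2_def\<close>)
    also have "\<dots> = card (rcosets K) * card S2" by (rule card_cartesian_product)
    also have "card S2 \<le> 2 * card S"
    proof -
      have "card S2 \<le> card S + card ((\<lambda>x. inv x) ` S)" unfolding S2_def by (rule card_Un_le)
      also have "card ((\<lambda>x. inv x) ` S) \<le> card S" by (rule card_image_le) (use S in auto)
      finally show ?thesis by simp
    qed
    hence "card (rcosets K) * card S2 \<le> card (rcosets K) * (2 * card S)" by simp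
    finally show ?thesis .
  qed
  have Tc: "T \<subseteq> carrier G" using TK Kc by blast
  have claim: "\<forall>D\<in>rcosets K. crep K D \<otimes> x \<otimes> inv (R (crep K D \<otimes> x)) \<in> generate G T"
    if "x \<in> generate G S" for x
    using that
  proof (induction rule: generate.induct)
    case one
    show ?case
    proof
      fix D assume D: "D \<in> rcosets K"
      note cp = crep_props[OF K(1) D]
      have "R (crep K D \<otimes> \<one>) = crep K D" using cp unfolding R_def by simp
      thus "crep K D \<otimes> \<one> \<otimes> inv (R (crep K D \<otimes> \<one>)) \<in> generate G T"
        using cp by (simp add: generate.one)
    qed
  next
    case (incl h)
    thus ?case unfolding T_def S2_def by (auto intro!: generate.incl)
  next
    case (inv h)
    thus ?case unfolding T_def S2_def by (auto intro!: generate.incl)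
  next
    case (eng x y)
    have xc: "x \<in> carrier G" "y \<in> carrier G" using eng.hyps S generate_in_carrier by blast+
    show ?case
    proof
      fix D assume D: "D \<in> rcosets K"
      note cp = crep_props[OF K(1) D]
      define D' where "D' = K #> (crep K D \<otimes> x)"
      have D': "D' \<in> rcosets K" unfolding D'_def using cp xc Kc by (intro rcosetsI) auto
      note cp' = crep_props[OF K(1) D']
      have u: "R (crep K D \<otimes> x) = crep K D'" unfolding R_def D'_def ..
      obtain k where k: "k \<in> K" "crep K D' = k \<otimes> (crep K D \<otimes> x)"
        using cp'(1) unfolding D'_def r_coset_def by blast
      have kc: "k \<in> carrier G" using k Kc by blast
      have "crep K D' \<otimes> y = k \<otimes> (crep K D \<otimes> x \<otimes> y)" using k kc cp xc by (simp add: m_assoc)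
      hence "crep K D' \<otimes> y \<in> K #> (crep K D \<otimes> x \<otimes> y)" using k unfolding r_coset_def by blast
      hence "K #> (crep K D' \<otimes> y) = K #> (crep K D \<otimes> x \<otimes> y)"
        using repr_independence[OF _ _ K(1)] cp xc by (metis m_closed)
      hence w: "R (crep K D' \<otimes> y) = R (crep K D \<otimes> (x \<otimes> y))" unfolding R_def using cp xc by (simp add: m_assoc)
      have a: "crep K D \<otimes> x \<otimes> inv (crep K D') \<in> generate G T" using eng.IH(1) D u by metis
      have b: "crep K D' \<otimes> y \<otimes> inv (R (crep K D \<otimes> (x \<otimes> y))) \<in> generate G T" using eng.IH(2) D' w by metis
      have Rc2: "R (crep K D \<otimes> (x \<otimes> y)) \<in> carrier G" using Rc cp xc by simp
      have "(crep K D \<otimes> x \<otimes> inv (crep K D')) \<otimes> (crep K D' \<otimes> y \<otimes> inv (R (crep K D \<otimes> (x \<otimes> y))))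
          = crep K D \<otimes> (x \<otimes> y) \<otimes> inv (R (crep K D \<otimes> (x \<otimes> y)))"
        using cp cp' xc Rc2 by (simp add: m_assoc inv_solve_left')
      thus "crep K D \<otimes> (x \<otimes> y) \<otimes> inv (R (crep K D \<otimes> (x \<otimes> y))) \<in> generate G T"
        using generate.eng[OF a b] by metis
    qed
  qed
  have "K \<subseteq> generate G T"
  proof
    fix k assume k: "k \<in> K"
    have kc: "k \<in> carrier G" using k Kc by blast
    have "R k = \<one>" unfolding R_def using coset_join2[OF kc K(1) k] crep_K by simp
    hence "crep K K \<otimes> k \<otimes> inv (R (crep K K \<otimes> k)) = k" using kc crep_K by simp
    thus "k \<in> generate G T" using claim[of k] S(3) kc K_rcosets[OF K(1)] by metis
  qed
  moreover have "generate G T \<subseteq> K" using generate_subgroup_incl[OF TK K(1)] .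
  ultimately show ?thesis using TK finT cardT by blast
qed


lemma quotient_gens:
  assumes A: "A \<lhd> G" and C: "subgroup C G" and CA: "C \<inter> A = {\<one>}"
    and S: "S \<subseteq> A <#> C" "finite S" "generate G S = A <#> C"
  shows "\<exists>T. T \<subseteq> C \<and> finite T \<and> card T \<le> card S \<and> generate G T = C"
proof -
  have Ac: "A \<subseteq> carrier G" using A normal_imp_subgroup subgroup.subset by blast
  have Cc: "C \<subseteq> carrier G" using C subgroup.subset by blast
  define phi where "phi s = (SOME c. c \<in> C \<and> (\<exists>a\<in>A. s = a \<otimes> c))" for s
  have phi: "phi s \<in> C \<and> (\<exists>a\<in>A. s = a \<otimes> phi s)" if "s \<in> S" for s
  proof -
    have "\<exists>c. c \<in> C \<and> (\<exists>a\<in>A. s = a \<otimes> c)" using that S(1) unfolding set_mult_def by blast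
    thus ?thesis unfolding phi_def by (rule someI_ex)
  qed
  define T where "T = phi ` S"
  have TC: "T \<subseteq> C" unfolding T_def using phi by blast
  have Tc: "T \<subseteq> carrier G" using TC Cc by blast
  have conj: "g \<otimes> a \<otimes> inv g \<in> A" if "g \<in> carrier G" "a \<in> A" for g a
    using A that unfolding normal_inv_iff by blast
  have claim: "\<exists>a\<in>A. \<exists>c\<in>generate G T. x = a \<otimes> c" if "x \<in> generate G S" for x
    using that
  proof (induction rule: generate.induct)
    case one
    have "\<one> \<in> A" using A normal_imp_subgroup subgroup.one_closed by blast
    moreover have "\<one> \<in> generate G T" by (rule generate.one)
    moreover have "\<one> = \<one> \<otimes> \<one>" by simp
    ultimately show ?case by blast
  next
    case (incl h)
    obtain a where a: "a \<in> A" "h = a \<otimes> phi h" using phi incl by blast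
    have "phi h \<in> generate G T" using incl unfolding T_def by (intro generate.incl) simp
    thus ?case using a by blast
  next
    case (inv h)
    obtain a where a: "a \<in> A" "h = a \<otimes> phi h" using phi inv by blast
    have pc: "phi h \<in> carrier G" using phi inv Cc by blast
    have ac: "a \<in> carrier G" using a Ac by blast
    have g1: "inv (phi h) \<in> generate G T" using inv unfolding T_def by (intro generate.inv) simp
    have ia: "inv a \<in> A" using a(1) subgroup.m_inv_closed[OF normal_imp_subgroup[OF A]] by blast
    have g2: "inv (phi h) \<otimes> inv a \<otimes> inv (inv (phi h)) \<in> A"
      using conj[OF inv_closed[OF pc] ia] .
    have "inv h = inv (a \<otimes> phi h)" using a(2) by (rule arg_cong)
    hence "inv h = (inv (phi h) \<otimes> inv a \<otimes> inv (inv (phi h))) \<otimes> inv (phi h)"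
      using pc ac by (simp add: inv_mult_group m_assoc)
    thus ?case using g1 g2 by blast
  next
    case (eng x y)
    obtain a1 c1 where 1: "a1 \<in> A" "c1 \<in> generate G T" "x = a1 \<otimes> c1" using eng.IH(1) by blast
    obtain a2 c2 where 2: "a2 \<in> A" "c2 \<in> generate G T" "y = a2 \<otimes> c2" using eng.IH(2) by blast
    have cc: "c1 \<in> carrier G" "c2 \<in> carrier G"
      using generate_in_carrier[OF Tc 1(2)] generate_in_carrier[OF Tc 2(2)] by auto
    have ac: "a1 \<in> carrier G" "a2 \<in> carrier G" using 1(1) 2(1) Ac by auto
    have "a1 \<otimes> (c1 \<otimes> a2 \<otimes> inv c1) \<in> A"
      using subgroup.m_closed[OF normal_imp_subgroup[OF A] 1(1) conj[OF cc(1) 2(1)]] .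
    moreover have "c1 \<otimes> c2 \<in> generate G T" using generate.eng[OF 1(2) 2(2)] .
    moreover have "(a1 \<otimes> (c1 \<otimes> a2 \<otimes> inv c1)) \<otimes> (c1 \<otimes> c2) = a1 \<otimes> c1 \<otimes> (a2 \<otimes> c2)"
      using cc ac by (simp add: m_assoc inv_solve_left')
    moreover have "x \<otimes> y = a1 \<otimes> c1 \<otimes> (a2 \<otimes> c2)" using 1(3) 2(3) by simp
    ultimately show ?case by metis
  qed
  have gT: "generate G T \<subseteq> C" using generate_subgroup_incl[OF TC C] .
  have "C \<subseteq> generate G T"
  proof
    fix x assume x: "x \<in> C"
    have "\<one> \<in> A" using A normal_imp_subgroup subgroup.one_closed by blast
    moreover have "x = \<one> \<otimes> x" using x Cc by auto
    ultimately have "x \<in> A <#> C" using x unfolding set_mult_def by blast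
    then obtain a c where ac: "a \<in> A" "c \<in> generate G T" "x = a \<otimes> c" using claim S(3) by blast
    have cC: "c \<in> C" using ac gT by blast
    have c: "c \<in> carrier G" "a \<in> carrier G" "x \<in> carrier G" using cC Cc ac Ac x by blast+
    have "a = x \<otimes> inv c" using ac c by (simp add: m_assoc)
    moreover have "x \<otimes> inv c \<in> C" using x cC C by (simp add: subgroup.m_closed subgroup.m_inv_closed)
    ultimately have "a \<in> C" by simp
    hence "a = \<one>" using CA ac by blast
    thus "x \<in> generate G T" using ac c by simp
  qed
  moreover have "card T \<le> card S" unfolding T_def by (rule card_image_le) (use S in auto)
  moreover have "finite T" unfolding T_def using S by auto
  ultimately show ?thesis using TC gT by blast
qed

lemma index_bound:
  assumes A: "A \<lhd> G" "finite A" and C: "subgroup C G" "finite (rcosets C)" and CA: "C \<inter> A = {\<one>}"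
    and K: "subgroup (A <#> C) G"
  shows "finite (rcosets (A <#> C)) \<and> card (rcosets (A <#> C)) * card A \<le> card (rcosets C)"
proof -
  define K where "K = A <#> C"
  have Ac: "A \<subseteq> carrier G" using A normal_imp_subgroup subgroup.subset by blast
  have Cc: "C \<subseteq> carrier G" using C subgroup.subset by blast
  have Ks: "subgroup K G" using K K_def by simp
  have Kc: "K \<subseteq> carrier G" using Ks subgroup.subset by blast
  have A1: "\<one> \<in> A" using A normal_imp_subgroup subgroup.one_closed by blast
  have C1: "\<one> \<in> C" using C subgroup.one_closed by blast
  have AK: "A \<subseteq> K" unfolding K_def set_mult_def using C1 Ac by force
  have CK: "C \<subseteq> K" unfolding K_def set_mult_def using A1 Cc by force
  define f where "f = (\<lambda>(D,a). C #> (a \<otimes> crep K D))"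
  have img: "f ` ((rcosets K) \<times> A) \<subseteq> rcosets C"
    unfolding f_def using crep_props[OF Ks] Ac Cc by (auto intro!: rcosetsI)
  have inj: "inj_on f ((rcosets K) \<times> A)"
  proof (rule inj_onI, clarify)
    fix D a D' b assume D: "D \<in> rcosets K" and a: "a \<in> A" and D': "D' \<in> rcosets K" and b: "b \<in> A"
      and eq: "f (D, a) = f (D', b)"
    note cp = crep_props[OF Ks D] and cp' = crep_props[OF Ks D']
    define x where "x = crep K D"
    define y where "y = crep K D'"
    have xy: "x \<in> carrier G" "y \<in> carrier G" using cp cp' x_def y_def by auto
    have abc: "a \<in> carrier G" "b \<in> carrier G" using a b Ac by auto
    have "b \<otimes> y \<in> C #> (a \<otimes> x)" using eq rcos_self[of "b \<otimes> y" C] C xy abc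
      unfolding f_def x_def y_def by simp
    then obtain c where c: "c \<in> C" "b \<otimes> y = c \<otimes> (a \<otimes> x)" unfolding r_coset_def by blast
    have cc: "c \<in> carrier G" using c Cc by blast
    have "y = inv b \<otimes> (b \<otimes> y)" using abc xy by (simp add: m_assoc[symmetric])
    also have "\<dots> = inv b \<otimes> (c \<otimes> (a \<otimes> x))" using c by simp
    also have "\<dots> = (inv b \<otimes> c \<otimes> a) \<otimes> x" using abc xy cc by (simp add: m_assoc)
    finally have y: "y = (inv b \<otimes> c \<otimes> a) \<otimes> x" .
    have "inv b \<otimes> c \<otimes> a \<in> K" using AK CK a b c Ks
      by (meson subgroup.m_closed subgroup.m_inv_closed subsetD)
    hence "y \<in> K #> x" using y unfolding r_coset_def by blast
    hence "K #> x = K #> y" using repr_independence[OF _ xy(1) Ks] by blast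
    hence DD: "D = D'" using cp(3) cp'(3) x_def y_def by simp
    hence "y = x" using x_def y_def by simp
    hence "b \<otimes> y = (c \<otimes> a) \<otimes> y" using c xy abc cc by (simp add: m_assoc)
    hence "b = c \<otimes> a" using xy abc cc by (simp add: r_cancel)
    hence "c = b \<otimes> inv a" using abc cc by (simp add: m_assoc)
    hence "c \<in> A" using a b A normal_imp_subgroup subgroup.m_closed subgroup.m_inv_closed by metis
    hence "c = \<one>" using c CA by blast
    hence "b = a" using \<open>b = c \<otimes> a\<close> abc by simp
    thus "D = D' \<and> a = b" using DD by simp
  qed
  have "card ((rcosets K) \<times> A) \<le> card (rcosets C)" using card_inj_on_le[OF inj img C(2)] .
  moreover have fin: "finite ((rcosets K) \<times> A)" using inj img C(2) finite_imageD finite_subset by blast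
  moreover have "finite (rcosets K)" using finite_cartesian_productD1[OF fin] A1 by blast
  ultimately show ?thesis unfolding K_def by (simp add: card_cartesian_product)
qed


lemma key:
  assumes S: "S \<subseteq> carrier G" "finite S" "generate G S = carrier G"
    and A: "A \<lhd> G" "finite A" and C: "subgroup C G" "finite (rcosets C)" "C \<inter> A = {\<one>}"
  shows "\<bar>rg_ratio G C\<bar> \<le> (2 * real (card S) + 1) / real (card A)"
proof -
  define K where "K = A <#> C"
  have Ks: "subgroup K G" unfolding K_def
    using second_isomorphism_grp.normal_set_mult_subgroup[of A G C] A(1) C(1)
    unfolding second_isomorphism_grp_def second_isomorphism_grp_axioms_def by blast
  have ib: "finite (rcosets K)" "card (rcosets K) * card A \<le> card (rcosets C)"
    using index_bound[OF A C(1,2) C(3)] Ks unfolding K_def by auto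
  obtain T0 where T0: "T0 \<subseteq> K" "finite T0" "card T0 \<le> card (rcosets K) * (2 * card S)" "generate G T0 = K"
    using schreier[OF S Ks ib(1)] by blast
  obtain T where T: "T \<subseteq> C" "finite T" "card T \<le> card T0" "generate G T = C"
    using quotient_gens[OF A(1) C(1) C(3), of T0] T0 unfolding K_def by blast
  have mg: "min_gens G C \<le> card T" unfolding min_gens_def
    by (rule Least_le) (use T in blast)
  have A1: "\<one> \<in> A" using A normal_imp_subgroup subgroup.one_closed by blast
  have a1: "card A \<ge> 1" using A1 A(2) by (metis One_nat_def Suc_leI card_gt_0_iff empty_iff)
  have k1: "card (rcosets K) \<ge> 1" using K_rcosets[OF Ks] ib(1)
    by (metis One_nat_def Suc_leI card_gt_0_iff empty_iff)
  define m where "m = real (min_gens G C)"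
  define nK where "nK = real (card (rcosets K))"
  define nC where "nC = real (card (rcosets C))"
  define a where "a = real (card A)"
  define d where "d = real (card S)"
  have "min_gens G C \<le> card (rcosets K) * (2 * card S)" using mg T(3) T0(3) by linarith
  hence "real (min_gens G C) \<le> real (card (rcosets K) * (2 * card S))" by (simp only: of_nat_le_iff)
  hence m1: "m \<le> 2 * d * nK" unfolding m_def d_def nK_def by (simp add: mult_ac)
  have m0: "m \<ge> 0" unfolding m_def by simp
  have d0: "d \<ge> 0" unfolding d_def by simp
  have nKa: "nK * a \<le> nC" using ib(2) unfolding nK_def a_def nC_def by (metis of_nat_le_iff of_nat_mult)
  have a1': "a \<ge> 1" using a1 unfolding a_def by simp
  have k1': "nK \<ge> 1" using k1 unfolding nK_def by simp
  have dn: "0 \<le> d * nK" using d0 k1' by simp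
  have abs1: "\<bar>m - 1\<bar> \<le> (2 * d + 1) * nK" using m1 m0 dn k1' by (simp add: abs_if algebra_simps)
  have "1 * 1 \<le> nK * a" using mult_mono[OF k1' a1'] k1' by simp
  hence nC0: "nC > 0" using nKa by simp
  have "\<bar>rg_ratio G C\<bar> = \<bar>m - 1\<bar> / nC"
    unfolding rg_ratio_def grp_index_def m_def nC_def by simp
  also have "\<dots> \<le> (2 * d + 1) * nK / nC" using abs1 nC0 by (simp add: divide_right_mono)
  also have "\<dots> \<le> (2 * d + 1) / a"
  proof -
    have "(2 * d + 1) * (nK * a) \<le> (2 * d + 1) * nC" using mult_left_mono[OF nKa] d0 by simp
    hence "(2 * d + 1) * nK * a \<le> (2 * d + 1) * nC" by (simp add: mult.assoc)
    thus ?thesis using nC0 a1' by (simp add: divide_simps)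
  qed
  finally show ?thesis unfolding d_def a_def .
qed

end

theorem proposition4:
  fixes G :: "('a, 'b) monoid_scheme" and A :: "nat \<Rightarrow> 'a set" and C :: "nat \<Rightarrow> 'a set"
  assumes "group G"
    and "finitely_generated_group G"
    and "\<And>i. A i \<lhd> G"
    and "\<And>i. finite (A i)"
    and "filterlim (\<lambda>i. card (A i)) at_top sequentially"
    and "is_chain G C"
    and "(\<Inter>j. C j) = {\<one>\<^bsub>G\<^esub>}"
  shows "(\<lambda>j. rg_ratio G (C j)) \<longlonglongrightarrow> 0"
proof -
  interpret group G by fact
  obtain S where S: "S \<subseteq> carrier G" "finite S" "generate G S = carrier G"
    using assms(2) unfolding finitely_generated_group_def by blast
  have sub: "subgroup (C j) G" "finite (rcosets\<^bsub>G\<^esub> (C j))" for j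
    using assms(6) unfolding is_chain_def by auto
  have step: "C (Suc n) \<subseteq> C n" for n using assms(6) unfolding is_chain_def by blast
  have anti: "C k \<subseteq> C j" if "j \<le> k" for j k
    using lift_Suc_antimono_le[of C, OF step that] .
  have ev: "eventually (\<lambda>j. C j \<inter> A i = {\<one>\<^bsub>G\<^esub>}) sequentially" for i
  proof -
    have "\<forall>a\<in>A i - {\<one>\<^bsub>G\<^esub>}. eventually (\<lambda>j. a \<notin> C j) sequentially"
    proof
      fix a assume a: "a \<in> A i - {\<one>\<^bsub>G\<^esub>}"
      hence "a \<notin> (\<Inter>j. C j)" using assms(7) by simp
      then obtain j where j: "a \<notin> C j" by blast
      have "\<forall>k\<ge>j. a \<notin> C k" using anti j by blast
      thus "eventually (\<lambda>j. a \<notin> C j) sequentially" unfolding eventually_sequentially by blast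
    qed
    moreover have "finite (A i - {\<one>\<^bsub>G\<^esub>})" using assms(4) by simp
    ultimately have E: "eventually (\<lambda>j. \<forall>a\<in>A i - {\<one>\<^bsub>G\<^esub>}. a \<notin> C j) sequentially"
      by (intro eventually_ball_finite) auto
    have o1: "\<one>\<^bsub>G\<^esub> \<in> A i" using subgroup.one_closed[OF normal_imp_subgroup[OF assms(3)]] .
    have o2: "\<one>\<^bsub>G\<^esub> \<in> C j" for j using subgroup.one_closed[OF sub(1)] .
    show ?thesis using E
    proof (rule eventually_mono)
      fix j assume "\<forall>a\<in>A i - {\<one>\<^bsub>G\<^esub>}. a \<notin> C j"
      thus "C j \<inter> A i = {\<one>\<^bsub>G\<^esub>}" using o1 o2[of j] by blast
    qed
  qed
  have bound: "eventually (\<lambda>j. \<bar>rg_ratio G (C j)\<bar> \<le> (2 * real (card S) + 1) / real (card (A i))) sequentially" for i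
    using ev[of i]
  proof (rule eventually_mono)
    fix j assume "C j \<inter> A i = {\<one>\<^bsub>G\<^esub>}"
    thus "\<bar>rg_ratio G (C j)\<bar> \<le> (2 * real (card S) + 1) / real (card (A i))"
      using key[OF S assms(3) assms(4) sub(1) sub(2)] by simp
  qed
  show ?thesis
  proof (rule LIMSEQ_I)
    fix r :: real assume r: "0 < r"
    define Z where "Z = nat \<lceil>(2 * real (card S) + 1) / r\<rceil> + 1"
    have "\<forall>Z. eventually (\<lambda>i. Z \<le> card (A i)) sequentially"
      using assms(5) unfolding filterlim_at_top .
    hence "eventually (\<lambda>i. Z \<le> card (A i)) sequentially" by (rule spec)
    then obtain N where N: "\<forall>i\<ge>N. Z \<le> card (A i)" unfolding eventually_sequentially by blast
    define i where "i = N"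
    have i: "Z \<le> card (A i)" using N i_def by simp
    have "(2 * real (card S) + 1) / r < real Z" unfolding Z_def by linarith
    also have "\<dots> \<le> real (card (A i))" using i by simp
    finally have lt0: "(2 * real (card S) + 1) / r < real (card (A i))" .
    hence 1: "2 * real (card S) + 1 < real (card (A i)) * r" using r by (simp add: pos_divide_less_eq)
    have "0 < (2 * real (card S) + 1) / r" using r by simp
    hence ca: "0 < real (card (A i))" using lt0 by linarith
    have lt: "(2 * real (card S) + 1) / real (card (A i)) < r"
      using 1 ca by (simp add: pos_divide_less_eq mult.commute)
    obtain no where no: "\<forall>j\<ge>no. \<bar>rg_ratio G (C j)\<bar> \<le> (2 * real (card S) + 1) / real (card (A i))"
      using bound[of i] unfolding eventually_sequentially by blast
    have "\<forall>n\<ge>no. norm (rg_ratio G (C n) - 0) < r"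
    proof (intro allI impI)
      fix n assume "no \<le> n"
      hence "\<bar>rg_ratio G (C n)\<bar> \<le> (2 * real (card S) + 1) / real (card (A i))" using no by blast
      thus "norm (rg_ratio G (C n) - 0) < r" using lt by simp
    qed
    thus "\<exists>no. \<forall>n\<ge>no. norm (rg_ratio G (C n) - 0) < r" by blast
  qed
qed

end
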